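(* Let $k$ be an algebraically closed field of characteristic zero and $0<l<n$. Let $Y,Z\subset\mathbb P^n$ be closed subvarieties with saturated homogeneous ideals $I_Y,I_Z$, $X$ defined by $I_X=I_Y\cap I_Z$, with $Y\subset\{x_0=\cdots=x_{l-1}=0\}$, $Z\subset\{x_{l+1}=\cdots=x_n=0\}$ and $Y\cap Z\neq\emptyset$. Let $\rho:\mathbb G_m\to\mathrm{GL}_{n+1}$ be diagonalized by $x_0,\dots,x_n$ with weights $(r_0,\dots,r_n)$, and let $\rho',\rho''$ be its restrictions to $\mathrm{GL}(kx_l+\cdots+kx_n)$ and $\mathrm{GL}(kx_0+\cdots+kx_l)$. Regard $Y$ as a subvariety of $\{x_0=\cdots=x_{l-1}=0\}\cong\mathbb P^{n-l}$ (ideal $I_Y\cap k[x_l,\dots,x_n]$) and $Z$ as a subvariety of $\{x_{l+1}=\cdots=x_n=0\}\cong\mathbb P^l$ (ideal $I_Z\cap k[x_0,\dots,x_l]$). Let $P_Y(m)=\dim_k(k[x_l,\dots,x_n]/\mathrm{in}_{\prec_{\rho'}}(I_Y\cap k[x_l,\dots,x_n]))_m$, $P_Z(m)=\dim_k(k[x_0,\dots,x_l]/\mathrm{in}_{\prec_{\rho''}}(I_Z\cap k[x_0,\dots,x_l]))_m$, and $P_X$ the Hilbert polynomial of $X$. Then \[ \mu([X]_m^\star,\rho)=\mu([Y]_m^\star,\rho')+\mu([Z]_m^\star,\rho'')-\frac{mP_Y(m)}{n+1-l}\sum_{i=l}^n r_i-\frac{mP_Z(m)}{l+1}\sum_{i=0}^l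 r_i+\frac{mP_X(m)}{n+1}\sum_{i=0}^n r_i+mr_l. \]
   Context: Here $m$ is a positive integer at least the Castelnuovo–Mumford regularity of all ideals involved, so that Hilbert points are defined and degree-$m$ quotient dimensions equal Hilbert polynomial values. For a homogeneous ideal $J\subset k[y_0,\dots,y_N]$ defining $W\subset\mathbb P^N$ with Hilbert polynomial $P_W$, and $\rho$ diagonal in the $y_i$ with weights $(r_0,\dots,r_N)$, the Hilbert–Mumford index of the $m$th dual Hilbert point $[W]_m^\star=[S_m\to S_m/J_m]$ is $\mu([W]_m^\star,\rho)=-\sum_{x^\alpha}\mathrm{wt}_\rho(x^\alpha)+\frac{mP_W(m)}{N+1}\sum_{i=0}^N r_i$, the sum over degree-$m$ monomials not in $\mathrm{in}_{\prec_\rho}(J)$, where $\mathrm{wt}_\rho(x^\alpha)=\sum\alpha_ir_i$ and $\prec_\rho$ is the $\rho$-weighted order (monomials compared first by $\rho$-weight, ties broken by a fixed monomial order), used consistently and restricted to subrings (giving $\prec_{\rho'},\prec_{\rho''}$). *)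

theory Defs
  imports "HOL-Library.Poly_Mapping" "HOL-Computational_Algebra.Polynomial"
begin

type_synonym mono = "nat \<Rightarrow>\<^sub>0 nat"
type_synonym 'a mpoly = "mono \<Rightarrow>\<^sub>0 'a"

definition alg_closed :: "'a::field itself \<Rightarrow> bool" where
  "alg_closed _ \<longleftrightarrow> (\<forall>p :: 'a poly. degree p > 0 \<longrightarrow> (\<exists>x. poly p x = 0))"

definition mdeg :: "mono \<Rightarrow> nat" where
  "mdeg a = (\<Sum>i\<in>Poly_Mapping.keys a. Poly_Mapping.lookup a i)"

definition polys_in :: "nat set \<Rightarrow> ('a::zero) mpoly set" where
  "polys_in V = {p. \<forall>a\<in>Poly_Mapping.keys p. Poly_Mapping.keys a \<subseteq> V}"

definition monos_deg :: "nat set \<Rightarrow> nat \<Rightarrow> mono set" where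
  "monos_deg V m = {a. Poly_Mapping.keys a \<subseteq> V \<and> mdeg a = m}"

definition homog_of_deg :: "nat \<Rightarrow> ('a::zero) mpoly \<Rightarrow> bool" where
  "homog_of_deg d p \<longleftrightarrow> (\<forall>a\<in>Poly_Mapping.keys p. mdeg a = d)"

definition homog :: "('a::zero) mpoly \<Rightarrow> bool" where
  "homog p \<longleftrightarrow> (\<exists>d. homog_of_deg d p)"

definition var :: "nat \<Rightarrow> ('a::{zero,one}) mpoly" where
  "var i = Poly_Mapping.single (Poly_Mapping.single i 1) 1"

definition mmonom :: "mono \<Rightarrow> ('a::{zero,one}) mpoly" where
  "mmonom a = Poly_Mapping.single a 1"

definition meval :: "('a::comm_semiring_1) mpoly \<Rightarrow> (nat \<Rightarrow> 'a) \<Rightarrow> 'a" where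
  "meval p x = (\<Sum>a\<in>Poly_Mapping.keys p. Poly_Mapping.lookup p a * (\<Prod>i\<in>Poly_Mapping.keys a. x i ^ Poly_Mapping.lookup a i))"

definition ideal_gen :: "nat set \<Rightarrow> ('a::comm_ring_1) mpoly set \<Rightarrow> 'a mpoly set" where
  "ideal_gen V G = {p. \<exists>F q. finite F \<and> F \<subseteq> G \<and> (\<forall>g\<in>F. q g \<in> polys_in V)
                          \<and> p = (\<Sum>g\<in>F. q g * g)}"

text \<open>Affine cone over projective space P^n: nonzero vectors (x_0,...,x_n),
  extended by 0 beyond index n.\<close>
definition cone_pts :: "nat \<Rightarrow> (nat \<Rightarrow> 'a::zero) set" where
  "cone_pts n = {x. (\<forall>i>n. x i = 0) \<and> (\<exists>i\<le>n. x i \<noteq> 0)}"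

definition proj_closed :: "nat \<Rightarrow> (nat \<Rightarrow> 'a::comm_semiring_1) set \<Rightarrow> bool" where
  "proj_closed n Y \<longleftrightarrow> (\<exists>F. F \<subseteq> polys_in {0..n} \<and> (\<forall>f\<in>F. homog f)
      \<and> Y = {x\<in>cone_pts n. \<forall>f\<in>F. meval f x = 0})"

definition proj_subvariety :: "nat \<Rightarrow> (nat \<Rightarrow> 'a::comm_semiring_1) set \<Rightarrow> bool" where
  "proj_subvariety n Y \<longleftrightarrow> proj_closed n Y \<and> Y \<noteq> {} \<and>
     (\<forall>Y1 Y2. proj_closed n Y1 \<longrightarrow> proj_closed n Y2 \<longrightarrow> Y = Y1 \<union> Y2 \<longrightarrow> Y = Y1 \<or> Y = Y2)"

text \<open>The saturated homogeneous ideal I_Y in k[x_0,...,x_n] of Y (its vanishing ideal).\<close>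
definition vanishing_ideal :: "nat \<Rightarrow> (nat \<Rightarrow> 'a::comm_semiring_1) set \<Rightarrow> 'a mpoly set" where
  "vanishing_ideal n Y = {f\<in>polys_in {0..n}. \<forall>x\<in>Y. meval f x = 0}"

definition monomial_order :: "(mono \<Rightarrow> mono \<Rightarrow> bool) \<Rightarrow> bool" where
  "monomial_order lt \<longleftrightarrow>
     (\<forall>a. \<not> lt a a) \<and> (\<forall>a b c. lt a b \<longrightarrow> lt b c \<longrightarrow> lt a c) \<and>
     (\<forall>a b. a \<noteq> b \<longrightarrow> lt a b \<or> lt b a) \<and> (\<forall>a. a \<noteq> 0 \<longrightarrow> lt 0 a) \<and>
     (\<forall>a b c. lt a b \<longrightarrow> lt (a + c) (b + c))"

definition wt :: "(nat \<Rightarrow> int) \<Rightarrow> mono \<Rightarrow> int" where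
  "wt r a = (\<Sum>i\<in>Poly_Mapping.keys a. int (Poly_Mapping.lookup a i) * r i)"

definition weighted_ord :: "(nat \<Rightarrow> int) \<Rightarrow> (mono \<Rightarrow> mono \<Rightarrow> bool) \<Rightarrow> mono \<Rightarrow> mono \<Rightarrow> bool" where
  "weighted_ord r lt a b \<longleftrightarrow> wt r a < wt r b \<or> (wt r a = wt r b \<and> lt a b)"

definition lead_mono :: "(mono \<Rightarrow> mono \<Rightarrow> bool) \<Rightarrow> ('a::zero) mpoly \<Rightarrow> mono" where
  "lead_mono ord f = (THE a. a \<in> Poly_Mapping.keys f \<and> (\<forall>b\<in>Poly_Mapping.keys f. b \<noteq> a \<longrightarrow> ord b a))"

definition lead_term :: "(mono \<Rightarrow> mono \<Rightarrow> bool) \<Rightarrow> ('a::zero) mpoly \<Rightarrow> 'a mpoly" where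
  "lead_term ord f = Poly_Mapping.single (lead_mono ord f) (Poly_Mapping.lookup f (lead_mono ord f))"

definition init_ideal :: "nat set \<Rightarrow> (mono \<Rightarrow> mono \<Rightarrow> bool) \<Rightarrow> ('a::comm_ring_1) mpoly set \<Rightarrow> 'a mpoly set" where
  "init_ideal V ord J = ideal_gen V {lead_term ord f | f. f \<in> J \<and> f \<noteq> 0}"

definition std_monos :: "nat set \<Rightarrow> (mono \<Rightarrow> mono \<Rightarrow> bool) \<Rightarrow> ('a::comm_ring_1) mpoly set \<Rightarrow> nat \<Rightarrow> mono set" where
  "std_monos V ord J m = {a\<in>monos_deg V m. mmonom a \<notin> init_ideal V ord J}"

text \<open>dim_k (k[x_i : i in V] / in(J))_m  (a monomial quotient).\<close>
definition init_quot_dim :: "nat set \<Rightarrow> (mono \<Rightarrow> mono \<Rightarrow> bool) \<Rightarrow> ('a::comm_ring_1) mpoly set \<Rightarrow> nat \<Rightarrow> nat" where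
  "init_quot_dim V ord J m = card (std_monos V ord J m)"

definition hilb_fun :: "nat set \<Rightarrow> ('a::field) mpoly set \<Rightarrow> nat \<Rightarrow> nat" where
  "hilb_fun V J m = card (monos_deg V m)
     - vector_space.dim (\<lambda>c p. Poly_Mapping.map ((*) c) p)
         {f\<in>J. f \<in> polys_in V \<and> homog_of_deg m f}"

text \<open>Hilbert--Mumford index of the m-th dual Hilbert point of W (ideal J in the
  variables V, N+1 = card V), with P_W(m) supplied as the argument P.\<close>
definition hm_index :: "nat set \<Rightarrow> (nat \<Rightarrow> int) \<Rightarrow> (mono \<Rightarrow> mono \<Rightarrow> bool) \<Rightarrow>
    ('a::comm_ring_1) mpoly set \<Rightarrow> nat \<Rightarrow> nat \<Rightarrow> real" where
  "hm_index V r lt J m P =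
     - real_of_int (\<Sum>a\<in>std_monos V (weighted_ord r lt) J m. wt r a)
     + real m * real P / real (card V) * real_of_int (\<Sum>i\<in>V. r i)"

end

theory Submission
  imports Defs "HOL-Library.FuncSet"
begin


abbreviation "keys \<equiv> Poly_Mapping.keys"
abbreviation "lkp \<equiv> Poly_Mapping.lookup"

definition strict_total :: "(mono \<Rightarrow> mono \<Rightarrow> bool) \<Rightarrow> bool" where
  "strict_total ord \<longleftrightarrow> (\<forall>a. \<not> ord a a) \<and> (\<forall>a b c. ord a b \<longrightarrow> ord b c \<longrightarrow> ord a c) \<and>
     (\<forall>a b. a \<noteq> b \<longrightarrow> ord a b \<or> ord b a)"

lemma weighted_st: "monomial_order lt \<Longrightarrow> strict_total (weighted_ord r lt)"
proof -
  assume m: "monomial_order lt"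
  have i: "\<forall>a. \<not> lt a a" and t: "\<forall>a b c. lt a b \<longrightarrow> lt b c \<longrightarrow> lt a c"
    and o: "\<forall>a b. a \<noteq> b \<longrightarrow> lt a b \<or> lt b a" using m unfolding monomial_order_def by blast+
  show ?thesis unfolding strict_total_def weighted_ord_def
  proof (intro conjI allI impI)
    fix a b c
    assume "wt r a < wt r b \<or> wt r a = wt r b \<and> lt a b" "wt r b < wt r c \<or> wt r b = wt r c \<and> lt b c"
    moreover have "lt a b \<Longrightarrow> lt b c \<Longrightarrow> lt a c" using t by blast
    ultimately show "wt r a < wt r c \<or> wt r a = wt r c \<and> lt a c" by linarith
  next
    fix a b :: mono assume "a \<noteq> b"
    then show "(wt r a < wt r b \<or> wt r a = wt r b \<and> lt a b) \<or> (wt r b < wt r a \<or> wt r b = wt r a \<and> lt b a)"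
      using o[rule_format, of a b] by linarith
  qed (use i in auto)
qed

lemma lead_exists:
  assumes st: "strict_total ord" and fin: "finite K" and ne: "K \<noteq> {}"
  shows "\<exists>a. a \<in> K \<and> (\<forall>b\<in>K. b \<noteq> a \<longrightarrow> ord b a)"
  using fin ne
proof (induction K rule: finite_ne_induct)
  case (singleton x) then show ?case by auto
next
  case (insert x F)
  then obtain a where a: "a \<in> F" "\<forall>b\<in>F. b \<noteq> a \<longrightarrow> ord b a" by auto
  show ?case
  proof (cases "ord a x")
    case True
    have t: "\<forall>a b c. ord a b \<longrightarrow> ord b c \<longrightarrow> ord a c" and i: "\<forall>a. \<not> ord a a"
      using st unfolding strict_total_def by blast+
    have "x \<noteq> a" using True i by auto
    have "\<forall>b\<in>insert x F. b \<noteq> x \<longrightarrow> ord b x"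
    proof
      fix b assume "b \<in> insert x F"
      then show "b \<noteq> x \<longrightarrow> ord b x" using a True t by (cases "b = a") blast+
    qed
    then show ?thesis by blast
  next
    case False
    have "\<forall>a b. a \<noteq> b \<longrightarrow> ord a b \<or> ord b a" using st unfolding strict_total_def by blast
    then have "x \<noteq> a \<longrightarrow> ord x a" using False by blast
    then show ?thesis using a by auto
  qed
qed

lemma lead_unique:
  assumes st: "strict_total ord" and a: "a \<in> K \<and> (\<forall>b\<in>K. b \<noteq> a \<longrightarrow> ord b a)"
  shows "(THE a. a \<in> K \<and> (\<forall>b\<in>K. b \<noteq> a \<longrightarrow> ord b a)) = a"
proof (rule the_equality)
  show "a \<in> K \<and> (\<forall>b\<in>K. b \<noteq> a \<longrightarrow> ord b a)" using a .
  fix x assume x: "x \<in> K \<and> (\<forall>b\<in>K. b \<noteq> x \<longrightarrow> ord b x)"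
  have t: "\<forall>a b c. ord a b \<longrightarrow> ord b c \<longrightarrow> ord a c" and i: "\<forall>a. \<not> ord a a"
    using st unfolding strict_total_def by blast+
  show "x = a"
  proof (rule ccontr)
    assume "x \<noteq> a"
    then have "ord x a" "ord a x" using a x by auto
    then show False using t i by blast
  qed
qed

lemma lead_mono_prop:
  assumes st: "strict_total ord" and "f \<noteq> 0"
  shows "lead_mono ord f \<in> keys f \<and> (\<forall>b\<in>keys f. b \<noteq> lead_mono ord f \<longrightarrow> ord b (lead_mono ord f))"
proof -
  obtain a where a: "a \<in> keys f \<and> (\<forall>b\<in>keys f. b \<noteq> a \<longrightarrow> ord b a)"
    using lead_exists[OF st, of "keys f"] assms by auto
  show ?thesis unfolding lead_mono_def using lead_unique[OF st a] a by simp
qed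

lemma lead_mono_sub:
  assumes st: "strict_total ord" and "f \<noteq> 0" "keys g \<subseteq> keys f" "lead_mono ord f \<in> keys g"
  shows "lead_mono ord g = lead_mono ord f"
  unfolding lead_mono_def[of ord g]
  apply (rule lead_unique[OF st])
  using lead_mono_prop[OF assms(1,2)] assms(3,4) by auto

lemma lead_mono_mmonom:
  assumes st: "strict_total ord"
  shows "lead_mono ord (mmonom a :: 'a::{zero_neq_one} mpoly) = a"
  unfolding lead_mono_def mmonom_def
  apply (rule lead_unique[OF st]) by simp

lemma L_gen:
  fixes J :: "'a::field mpoly set"
  assumes st: "strict_total ord" and f: "f \<in> J" "f \<noteq> 0"
    and a: "a = lead_mono ord f + c" and c: "keys c \<subseteq> V"
  shows "mmonom a \<in> init_ideal V ord J"
proof -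
  let ?b = "lead_mono ord f"
  let ?g = "lead_term ord f"
  have bk: "?b \<in> keys f" using lead_mono_prop[OF st f(2)] by blast
  hence nz: "lkp f ?b \<noteq> 0" by (metis in_keys_iff)
  define q where "q = (\<lambda>_::'a mpoly. Poly_Mapping.single c (inverse (lkp f ?b)))"
  have qV: "q ?g \<in> polys_in V" unfolding q_def polys_in_def using c by auto
  have "mmonom a = q ?g * ?g"
    unfolding q_def lead_term_def mmonom_def mult_single a using nz
    by (simp add: add.commute)
  then show ?thesis unfolding init_ideal_def ideal_gen_def
    apply (intro CollectI exI[of _ "{?g}"] exI[of _ q])
    using f qV by auto
qed

lemma L_div:
  fixes J :: "'a::field mpoly set"
  assumes "mmonom a \<in> init_ideal V ord J"
  shows "\<exists>f\<in>J. f \<noteq> 0 \<and> (\<exists>c. a = lead_mono ord f + c)"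
proof -
  obtain F q where F: "finite F" "F \<subseteq> {lead_term ord f | f. f \<in> J \<and> f \<noteq> 0}"
     and eq: "mmonom a = (\<Sum>g\<in>F. q g * g)"
    using assms unfolding init_ideal_def ideal_gen_def by blast
  have "a \<in> keys (mmonom a :: 'a mpoly)" unfolding mmonom_def by simp
  moreover have "keys (mmonom a :: 'a mpoly) \<subseteq> (\<Union>g\<in>F. keys (q g * g))"
    unfolding eq by (rule keys_sum)
  ultimately have "a \<in> (\<Union>g\<in>F. keys (q g * g))" by blast
  then obtain g where g: "g \<in> F" "a \<in> keys (q g * g)" by blast
  then obtain f where f: "f \<in> J" "f \<noteq> 0" "g = lead_term ord f" using F by blast
  have "keys g \<subseteq> {lead_mono ord f}" unfolding f lead_term_def by simp
  then have "a \<in> {x + y | x y. x \<in> keys (q g) \<and> y \<in> {lead_mono ord f}}"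
    using keys_mult[of "q g" g] g(2) by blast
  then show ?thesis using f by (auto simp: add.commute)
qed



lemma polys_in_mono: "V \<subseteq> V' \<Longrightarrow> polys_in V \<subseteq> polys_in V'"
  unfolding polys_in_def by blast

lemma keys_add_mono: "keys ((b::mono) + c) = keys b \<union> keys c"
  by (rule set_eqI) (metis in_keys_iff lookup_add add_is_0 Un_iff)

lemma E0:
  fixes g :: "'a::comm_semiring_1 mpoly"
  assumes "\<forall>a\<in>keys g. \<exists>j\<in>keys a. x j = 0"
  shows "meval g x = 0"
  unfolding meval_def
proof (rule sum.neutral, intro ballI)
  fix a assume "a \<in> keys g"
  then obtain j where j: "j \<in> keys a" "x j = 0" using assms by blast
  have "lkp a j \<noteq> 0" using j(1) by (metis in_keys_iff)
  then have "x j ^ lkp a j = 0" using j(2) by (simp add: power_0_left)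
  then have "(\<Prod>i\<in>keys a. x i ^ lkp a i) = 0" using j(1) by (intro prod_zero; blast intro: finite_keys)
  then show "lkp g a * (\<Prod>i\<in>keys a. x i ^ lkp a i) = 0" by simp
qed

definition restr :: "nat set \<Rightarrow> 'a::zero mpoly \<Rightarrow> 'a mpoly" where
  "restr W f = Abs_poly_mapping (\<lambda>a. if keys a \<subseteq> W then lkp f a else 0)"

lemma lookup_restr: "lkp (restr W f) a = (if keys a \<subseteq> W then lkp f a else 0)"
proof -
  have "finite {a. (if keys a \<subseteq> W then lkp f a else 0) \<noteq> 0}"
  proof (rule finite_subset[of _ "keys f"])
    show "{a. (if keys a \<subseteq> W then lkp f a else 0) \<noteq> 0} \<subseteq> keys f"
    proof
      fix a assume "a \<in> {a. (if keys a \<subseteq> W then lkp f a else 0) \<noteq> 0}"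
      then have "lkp f a \<noteq> 0" by (cases "keys a \<subseteq> W") simp_all
      then show "a \<in> keys f" by (metis in_keys_iff)
    qed
  qed simp
  then show ?thesis unfolding restr_def by simp
qed

lemma keys_restr: "keys (restr W f) = {a\<in>keys f. keys a \<subseteq> W}"
proof (rule set_eqI)
  fix a
  have "a \<in> keys (restr W f) \<longleftrightarrow> lkp (restr W f) a \<noteq> 0" by (rule in_keys_iff)
  also have "\<dots> \<longleftrightarrow> keys a \<subseteq> W \<and> lkp f a \<noteq> 0"
    unfolding lookup_restr by (cases "keys a \<subseteq> W") simp_all
  also have "\<dots> \<longleftrightarrow> a \<in> {a\<in>keys f. keys a \<subseteq> W}" using in_keys_iff[of a f] by blast
  finally show "a \<in> keys (restr W f) \<longleftrightarrow> a \<in> {a\<in>keys f. keys a \<subseteq> W}" .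
qed

lemma E1:
  fixes f :: "'a::comm_semiring_1 mpoly"
  assumes "\<forall>i. i \<notin> W \<longrightarrow> x i = 0"
  shows "meval f x = meval (restr W f) x"
  unfolding meval_def
proof (rule sum.mono_neutral_cong_right)
  show "keys (restr W f) \<subseteq> keys f" by (auto simp: keys_restr)
  show "finite (keys f)" by simp
  show "\<forall>a\<in>keys f - keys (restr W f). lkp f a * (\<Prod>i\<in>keys a. x i ^ lkp a i) = 0"
  proof
    fix a assume a: "a \<in> keys f - keys (restr W f)"
    then obtain j where j: "j \<in> keys a" "j \<notin> W" by (auto simp: keys_restr)
    have "lkp a j \<noteq> 0" using j(1) by (metis in_keys_iff)
    then have "x j ^ lkp a j = 0" using assms j(2) by (simp add: power_0_left)
    then have "(\<Prod>i\<in>keys a. x i ^ lkp a i) = 0" using j(1) by (intro prod_zero; blast intro: finite_keys)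
    then show "lkp f a * (\<Prod>i\<in>keys a. x i ^ lkp a i) = 0" by simp
  qed
  show "\<And>a. a \<in> keys (restr W f) \<Longrightarrow>
     lkp f a * (\<Prod>i\<in>keys a. x i ^ lkp a i) = lkp (restr W f) a * (\<Prod>i\<in>keys a. x i ^ lkp a i)"
    by (auto simp: keys_restr lookup_restr)
qed

lemma meval_scale:
  fixes f :: "'a::comm_semiring_1 mpoly"
  assumes "homog_of_deg d f"
  shows "meval f (\<lambda>i. c * x i) = c ^ d * meval f x"
  unfolding meval_def sum_distrib_left
proof (rule sum.cong[OF refl])
  fix a assume a: "a \<in> keys f"
  have "(\<Prod>i\<in>keys a. (c * x i) ^ lkp a i) = (\<Prod>i\<in>keys a. c ^ lkp a i) * (\<Prod>i\<in>keys a. x i ^ lkp a i)"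
    by (simp add: power_mult_distrib prod.distrib)
  also have "(\<Prod>i\<in>keys a. c ^ lkp a i) = c ^ d"
    using assms a unfolding homog_of_deg_def mdeg_def by (simp add: power_sum[symmetric])
  finally show "lkp f a * (\<Prod>i\<in>keys a. (c * x i) ^ lkp a i) = c ^ d * (lkp f a * (\<Prod>i\<in>keys a. x i ^ lkp a i))"
    by (simp add: ac_simps)
qed

lemma closed_scale:
  fixes Y :: "(nat \<Rightarrow> 'a::field) set"
  assumes "proj_closed n Y" "x \<in> Y" "c \<noteq> 0"
  shows "(\<lambda>i. c * x i) \<in> Y"
proof -
  obtain F where F: "\<forall>f\<in>F. homog f" "Y = {x\<in>cone_pts n. \<forall>f\<in>F. meval f x = 0}"
    using assms(1) unfolding proj_closed_def by blast
  have "(\<lambda>i. c * x i) \<in> cone_pts n" using assms(2,3) F(2) unfolding cone_pts_def by auto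
  moreover have "\<forall>f\<in>F. meval f (\<lambda>i. c * x i) = 0"
  proof
    fix f assume "f \<in> F"
    then obtain d where "homog_of_deg d f" using F(1) unfolding homog_def by blast
    then show "meval f (\<lambda>i. c * x i) = 0" using meval_scale \<open>f \<in> F\<close> assms(2) F(2) by fastforce
  qed
  ultimately show ?thesis using F(2) by blast
qed

lemma P2:
  fixes g :: "'a::field_char_0 mpoly"
  assumes "\<forall>t. t \<noteq> 0 \<longrightarrow> meval g (\<lambda>i. if i = l then t else 0) = 0"
  shows "\<forall>a\<in>keys g. \<not> keys a \<subseteq> {l}"
proof (rule ccontr)
  assume "\<not> ?thesis"
  then obtain a0 where a0: "a0 \<in> keys g" "keys a0 \<subseteq> {l}" by blast
  define K where "K = {a\<in>keys g. keys a \<subseteq> {l}}"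
  have finK: "finite K" unfolding K_def by simp
  define P where "P = (\<Sum>a\<in>K. monom (lkp g a) (lkp a l))"
  have ev: "meval g (\<lambda>i. if i = l then t else 0) = poly P t" for t
  proof -
    have "meval g (\<lambda>i. if i = l then t else 0) = (\<Sum>a\<in>K. lkp g a * t ^ lkp a l)"
      unfolding meval_def
    proof (rule sum.mono_neutral_cong_right)
      show "K \<subseteq> keys g" "finite (keys g)" unfolding K_def by auto
      show "\<forall>a\<in>keys g - K. lkp g a * (\<Prod>i\<in>keys a. (if i = l then t else 0) ^ lkp a i) = 0"
      proof
        fix a assume a: "a \<in> keys g - K"
        then obtain j where j: "j \<in> keys a" "j \<noteq> l" unfolding K_def by auto
        have "lkp a j \<noteq> 0" using j(1) by (metis in_keys_iff)
        then have "(if j = l then t else 0) ^ lkp a j = 0" using j(2) by (simp add: power_0_left)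
        then have "(\<Prod>i\<in>keys a. (if i = l then t else 0) ^ lkp a i) = 0" using j(1) by (intro prod_zero; blast intro: finite_keys)
        then show "lkp g a * (\<Prod>i\<in>keys a. (if i = l then t else 0) ^ lkp a i) = 0" by simp
      qed
      show "lkp g a * (\<Prod>i\<in>keys a. (if i = l then t else 0) ^ lkp a i) = lkp g a * t ^ lkp a l"
        if "a \<in> K" for a
      proof -
        have k: "keys a \<subseteq> {l}" using that unfolding K_def by auto
        show ?thesis
        proof (cases "keys a = {}")
          case True
          then have "lkp a l = 0" by (metis empty_iff in_keys_iff)
          then show ?thesis using True by simp
        next
          case False
          then have "keys a = {l}" using k by blast
          then show ?thesis by simp
        qed
      qed
    qed
    also have "\<dots> = poly P t" unfolding P_def poly_sum poly_monom by simp
    finally show ?thesis .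
  qed
  have "P = 0"
  proof (rule ccontr)
    assume "P \<noteq> 0"
    then have "finite {t. poly P t = 0}" by (rule poly_roots_finite)
    moreover have "UNIV - {0} \<subseteq> {t. poly P t = 0}" using assms ev by auto
    ultimately have "finite (UNIV - {0::'a})" by (rule finite_subset[rotated])
    then show False using infinite_UNIV_char_0[where 'a='a] by simp
  qed
  have "coeff P (lkp a0 l) = (\<Sum>a\<in>K. if a = a0 then lkp g a else 0)"
    unfolding P_def coeff_sum coeff_monom
  proof (rule sum.cong[OF refl])
    fix a assume "a \<in> K"
    then have k: "keys a \<subseteq> {l}" unfolding K_def by auto
    have "lkp a l = lkp a0 l \<longleftrightarrow> a = a0"
    proof
      assume h: "lkp a l = lkp a0 l"
      show "a = a0"
      proof (rule poly_mapping_eqI)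
        fix i show "lkp a i = lkp a0 i"
        proof (cases "i = l")
          case True then show ?thesis using h by simp
        next
          case False
          then have "i \<notin> keys a" "i \<notin> keys a0" using k a0(2) by auto
          then show ?thesis by (metis in_keys_iff)
        qed
      qed
    qed simp
    then show "(if lkp a l = lkp a0 l then lkp g a else 0) = (if a = a0 then lkp g a else 0)" by simp
  qed
  also have "\<dots> = lkp g a0" using finK a0 unfolding K_def by (simp add: sum.delta)
  finally have "lkp g a0 = 0" using \<open>P = 0\<close> by simp
  then show False using a0(1) by (metis in_keys_iff)
qed

lemma fin_monos: assumes "finite V" shows "finite (monos_deg V m)"
proof -
  have inj: "inj_on (\<lambda>a. restrict (lkp a) V) (monos_deg V m)"
  proof
    fix a b assume a: "a \<in> monos_deg V m" and b: "b \<in> monos_deg V m"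
      and e: "restrict (lkp a) V = restrict (lkp b) V"
    show "a = b"
    proof (rule poly_mapping_eqI)
      fix i show "lkp a i = lkp b i"
      proof (cases "i \<in> V")
        case True then show ?thesis using fun_cong[OF e, of i] by simp
      next
        case False
        then have "i \<notin> keys a" "i \<notin> keys b" using a b unfolding monos_deg_def by auto
        then show ?thesis by (metis in_keys_iff)
      qed
    qed
  qed
  have "(\<lambda>a. restrict (lkp a) V) ` monos_deg V m \<subseteq> (\<Pi>\<^sub>E i \<in> V. {..m})"
  proof
    fix h assume "h \<in> (\<lambda>a. restrict (lkp a) V) ` monos_deg V m"
    then obtain a where a: "a \<in> monos_deg V m" "h = restrict (lkp a) V" by blast
    have "lkp a i \<le> m" for i
    proof (cases "i \<in> keys a")
      case True
      have "lkp a i \<le> (\<Sum>j\<in>keys a. lkp a j)" by (rule member_le_sum) (use True in auto)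
      then show ?thesis using a(1) unfolding monos_deg_def mdeg_def by simp
    next
      case False then have "lkp a i = 0" by (metis in_keys_iff)
      then show ?thesis by simp
    qed
    then show "h \<in> (\<Pi>\<^sub>E i \<in> V. {..m})" unfolding a(2) restrict_PiE_iff by simp
  qed
  then have "finite ((\<lambda>a. restrict (lkp a) V) ` monos_deg V m)"
    by (rule finite_subset) (rule finite_PiE[OF assms], simp)
  then show ?thesis using finite_imageD inj by blast
qed



lemma aux_eq: "(x::real) = y + z - c \<Longrightarrow> - x + X = (- y + A) + (- z + B) - A - B + X + c"
  by simp

theorem lemma4p1:
  fixes Y Z :: "(nat \<Rightarrow> 'a::field_char_0) set"
    and n l m :: nat and r :: "nat \<Rightarrow> int" and lt :: "mono \<Rightarrow> mono \<Rightarrow> bool"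
  assumes "alg_closed TYPE('a)"
    and "0 < l" and "l < n" and "0 < m"
    and "monomial_order lt"
    and "proj_subvariety n Y" and "proj_subvariety n Z"
    and "\<forall>x\<in>Y. \<forall>i<l. x i = 0"
    and "\<forall>x\<in>Z. \<forall>i\<in>{l+1..n}. x i = 0"
    and "Y \<inter> Z \<noteq> {}"
  shows
    "let IY = vanishing_ideal n Y; IZ = vanishing_ideal n Z; IX = IY \<inter> IZ;
         Y' = IY \<inter> polys_in {l..n}; Z' = IZ \<inter> polys_in {0..l};
         PY = init_quot_dim {l..n} (weighted_ord r lt) Y' m;
         PZ = init_quot_dim {0..l} (weighted_ord r lt) Z' m;
         PX = hilb_fun {0..n} IX m
     in hm_index {0..n} r lt IX m PX
        = hm_index {l..n} r lt Y' m PY + hm_index {0..l} r lt Z' m PZ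
          - real m * real PY / real (n + 1 - l) * real_of_int (\<Sum>i=l..n. r i)
          - real m * real PZ / real (l + 1) * real_of_int (\<Sum>i=0..l. r i)
          + real m * real PX / real (n + 1) * real_of_int (\<Sum>i=0..n. r i)
          + real m * real_of_int (r l)"
proof -
  define W where "W = weighted_ord r lt"
  have st: "strict_total W" unfolding W_def using weighted_st assms(5) by blast
  define IY where "IY = vanishing_ideal n Y"
  define IZ where "IZ = vanishing_ideal n Z"
  define IX where "IX = IY \<inter> IZ"
  define Y' where "Y' = IY \<inter> polys_in {l..n}"
  define Z' where "Z' = IZ \<inter> polys_in {0..l}"
  define SX where "SX = std_monos {0..n} W IX m"
  define SY where "SY = std_monos {l..n} W Y' m"
  define SZ where "SZ = std_monos {0..l} W Z' m"
  have clY: "proj_closed n Y" and clZ: "proj_closed n Z"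
    using assms(6,7) unfolding proj_subvariety_def by auto
  have Ycone: "Y \<subseteq> cone_pts n" using clY unfolding proj_closed_def by blast
  have Zcone: "Z \<subseteq> cone_pts n" using clZ unfolding proj_closed_def by blast
  have Yzero: "\<forall>i. i \<notin> {l..n} \<longrightarrow> x i = 0" if "x \<in> Y" for x
    using that assms(8) Ycone unfolding cone_pts_def by auto
  have Zzero: "\<forall>i. i \<notin> {0..l} \<longrightarrow> x i = 0" if "x \<in> Z" for x
  proof (intro allI impI)
    fix i assume "i \<notin> {0..l}"
    then have "l < i" by auto
    show "x i = 0"
    proof (cases "i \<le> n")
      case True then show ?thesis using that assms(9) \<open>l < i\<close> by auto
    next
      case False then show ?thesis using that Zcone unfolding cone_pts_def by auto
    qed
  qed
  obtain x0 where x0: "x0 \<in> Y" "x0 \<in> Z" using assms(10) by blast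
  have x0z: "x0 i = 0" if "i \<noteq> l" for i
    using Yzero[OF x0(1)] Zzero[OF x0(2)] that by (cases "i < l") auto
  have x0l: "x0 l \<noteq> 0"
  proof -
    obtain i where "i \<le> n" "x0 i \<noteq> 0" using x0(1) Ycone unfolding cone_pts_def by blast
    then show ?thesis using x0z by metis
  qed
  have el: "(\<lambda>i. if i = l then t else 0) = (\<lambda>i. (t / x0 l) * x0 i)" for t
    using x0z x0l by (auto simp: fun_eq_iff)
  have elY: "(\<lambda>i. if i = l then t else 0) \<in> Y" if "t \<noteq> 0" for t
    unfolding el by (rule closed_scale[OF clY x0(1)]) (use that x0l in simp)
  have elZ: "(\<lambda>i. if i = l then t else 0) \<in> Z" if "t \<noteq> 0" for t
    unfolding el by (rule closed_scale[OF clZ x0(2)]) (use that x0l in simp)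
  have noY: "\<forall>a\<in>keys g. \<not> keys a \<subseteq> {l}" if "g \<in> IY" for g
    using that elY unfolding IY_def vanishing_ideal_def by (intro P2) auto
  have noZ: "\<forall>a\<in>keys g. \<not> keys a \<subseteq> {l}" if "g \<in> IZ" for g
    using that elZ unfolding IZ_def vanishing_ideal_def by (intro P2) auto
  have keys_le: "keys (lead_mono W f) \<subseteq> keys a" if "a = lead_mono W f + c" for f c a
    using that keys_add_mono by blast
  have keys_le2: "keys c \<subseteq> keys a" if "a = lead_mono W f + c" for f c a
    using that keys_add_mono by blast

  have C1: "SY \<subseteq> SX"
  proof
    fix a assume a: "a \<in> SY"
    then have am: "a \<in> monos_deg {l..n} m" and an: "mmonom a \<notin> init_ideal {l..n} W Y'"
      unfolding SY_def std_monos_def by auto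
    have "mmonom a \<notin> init_ideal {0..n} W IX"
    proof
      assume "mmonom a \<in> init_ideal {0..n} W IX"
      then obtain f c where f: "f \<in> IX" "f \<noteq> 0" "a = lead_mono W f + c" using L_div by blast
      define g where "g = restr {l..n} f"
      have ka: "keys a \<subseteq> {l..n}" using am unfolding monos_deg_def by auto
      have bf: "lead_mono W f \<in> keys f" using lead_mono_prop[OF st f(2)] by blast
      have bg: "lead_mono W f \<in> keys g" unfolding g_def keys_restr using bf keys_le[OF f(3)] ka by auto
      have gf: "keys g \<subseteq> keys f" unfolding g_def keys_restr by auto
      have g0: "g \<noteq> 0" using bg by auto
      have lg: "lead_mono W g = lead_mono W f" using lead_mono_sub[OF st f(2) gf bg] .
      have gY: "g \<in> Y'"
      proof -
        have "g \<in> polys_in {l..n}" unfolding g_def polys_in_def using keys_restr[of "{l..n}" f] by auto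
        moreover have "g \<in> polys_in {0..n}" using calculation polys_in_mono[of "{l..n}" "{0..n}"] by auto
        moreover have "\<forall>x\<in>Y. meval g x = 0"
        proof
          fix x assume "x \<in> Y"
          then have "meval g x = meval f x" unfolding g_def by (rule sym[OF E1[OF Yzero]])
          then show "meval g x = 0" using f(1) \<open>x \<in> Y\<close> unfolding IX_def IY_def vanishing_ideal_def by auto
        qed
        ultimately show ?thesis unfolding Y'_def IY_def vanishing_ideal_def by auto
      qed
      have "mmonom a \<in> init_ideal {l..n} W Y'"
        using L_gen[OF st gY g0, of a c] f(3) lg keys_le2[OF f(3)] ka by auto
      then show False using an by simp
    qed
    moreover have "a \<in> monos_deg {0..n} m" using am unfolding monos_deg_def by auto
    ultimately show "a \<in> SX" unfolding SX_def std_monos_def by auto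
  qed

  have C2: "SZ \<subseteq> SX"
  proof
    fix a assume a: "a \<in> SZ"
    then have am: "a \<in> monos_deg {0..l} m" and an: "mmonom a \<notin> init_ideal {0..l} W Z'"
      unfolding SZ_def std_monos_def by auto
    have "mmonom a \<notin> init_ideal {0..n} W IX"
    proof
      assume "mmonom a \<in> init_ideal {0..n} W IX"
      then obtain f c where f: "f \<in> IX" "f \<noteq> 0" "a = lead_mono W f + c" using L_div by blast
      define g where "g = restr {0..l} f"
      have ka: "keys a \<subseteq> {0..l}" using am unfolding monos_deg_def by auto
      have bf: "lead_mono W f \<in> keys f" using lead_mono_prop[OF st f(2)] by blast
      have bg: "lead_mono W f \<in> keys g" unfolding g_def keys_restr using bf keys_le[OF f(3)] ka by auto
      have gf: "keys g \<subseteq> keys f" unfolding g_def keys_restr by auto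
      have g0: "g \<noteq> 0" using bg by auto
      have lg: "lead_mono W g = lead_mono W f" using lead_mono_sub[OF st f(2) gf bg] .
      have gZ: "g \<in> Z'"
      proof -
        have "g \<in> polys_in {0..l}" unfolding g_def polys_in_def using keys_restr[of "{0..l}" f] by auto
        moreover have "g \<in> polys_in {0..n}" using calculation polys_in_mono[of "{0..l}" "{0..n}"] assms(3) by auto
        moreover have "\<forall>x\<in>Z. meval g x = 0"
        proof
          fix x assume "x \<in> Z"
          then have "meval g x = meval f x" unfolding g_def by (rule sym[OF E1[OF Zzero]])
          then show "meval g x = 0" using f(1) \<open>x \<in> Z\<close> unfolding IX_def IZ_def vanishing_ideal_def by auto
        qed
        ultimately show ?thesis unfolding Z'_def IZ_def vanishing_ideal_def by auto
      qed
      have "mmonom a \<in> init_ideal {0..l} W Z'"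
        using L_gen[OF st gZ g0, of a c] f(3) lg keys_le2[OF f(3)] ka by auto
      then show False using an by simp
    qed
    moreover have "a \<in> monos_deg {0..n} m" using am assms(3) unfolding monos_deg_def by auto
    ultimately show "a \<in> SX" unfolding SX_def std_monos_def by auto
  qed

  have C3: "SX \<subseteq> SY \<union> SZ"
  proof
    fix a assume a: "a \<in> SX"
    then have am: "a \<in> monos_deg {0..n} m" and an: "mmonom a \<notin> init_ideal {0..n} W IX"
      unfolding SX_def std_monos_def by auto
    have ka: "keys a \<subseteq> {0..n}" using am unfolding monos_deg_def by auto
    have md: "mdeg a = m" using am unfolding monos_deg_def by auto
    have mk: "keys (mmonom a :: 'a mpoly) = {a}" unfolding mmonom_def by simp
    show "a \<in> SY \<union> SZ"
    proof (cases "(\<exists>i\<in>keys a. i < l) \<and> (\<exists>j\<in>keys a. l < j)")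
      case True
      then obtain i j where ij: "i \<in> keys a" "i < l" "j \<in> keys a" "l < j" by blast
      have "mmonom a \<in> IX"
      proof -
        have "(mmonom a :: 'a mpoly) \<in> polys_in {0..n}" using ka by (simp add: polys_in_def mmonom_def)
        moreover have "\<forall>x\<in>Y. meval (mmonom a) x = 0"
        proof
          fix x assume x: "x \<in> Y"
          have "x i = 0" using assms(8) x ij(2) by blast
          then have "\<forall>a'\<in>keys (mmonom a :: 'a mpoly). \<exists>j\<in>keys a'. x j = 0" using ij(1) by (simp add: mmonom_def) blast
          then show "meval (mmonom a) x = 0" by (rule E0)
        qed
        moreover have "\<forall>x\<in>Z. meval (mmonom a) x = 0"
        proof
          fix x assume x: "x \<in> Z"
          have "j \<le> n" using ka ij(3) by auto
          then have "x j = 0" using assms(9) x ij(4) by auto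
          then have "\<forall>a'\<in>keys (mmonom a :: 'a mpoly). \<exists>j\<in>keys a'. x j = 0" using ij(3) by (simp add: mmonom_def) blast
          then show "meval (mmonom a) x = 0" by (rule E0)
        qed
        ultimately show ?thesis unfolding IX_def IY_def IZ_def vanishing_ideal_def by auto
      qed
      moreover have "mmonom a \<noteq> (0 :: 'a mpoly)" using mk by auto
      moreover have "lead_mono W (mmonom a :: 'a mpoly) = a" by (rule lead_mono_mmonom[OF st])
      ultimately have "mmonom a \<in> init_ideal {0..n} W IX"
        using L_gen[OF st, of "mmonom a" IX a 0 "{0..n}"] by simp
      then show ?thesis using an by simp
    next
      case False
      have "keys a \<subseteq> {l..n} \<or> keys a \<subseteq> {0..l}"
      proof (cases "\<exists>i\<in>keys a. i < l")
        case True
        then have "\<forall>j\<in>keys a. j \<le> l" using False by (auto simp: not_less)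
        then show ?thesis by auto
      next
        case F2: False
        then have "\<forall>j\<in>keys a. l \<le> j" by (auto simp: not_less)
        then show ?thesis using ka by auto
      qed
      then show ?thesis
      proof
        assume kl: "keys a \<subseteq> {l..n}"
        have "mmonom a \<notin> init_ideal {l..n} W Y'"
        proof
          assume "mmonom a \<in> init_ideal {l..n} W Y'"
          then obtain g c where g: "g \<in> Y'" "g \<noteq> 0" "a = lead_mono W g + c" using L_div by blast
          have "g \<in> IZ"
          proof -
            have "g \<in> polys_in {0..n}" using g(1) unfolding Y'_def IY_def vanishing_ideal_def by auto
            moreover have "\<forall>x\<in>Z. meval g x = 0"
            proof (intro ballI E0)
              fix x a' assume x: "x \<in> Z" and a': "a' \<in> keys g"
              have "keys a' \<subseteq> {l..n}" using g(1) a' unfolding Y'_def polys_in_def by auto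
              moreover have "\<not> keys a' \<subseteq> {l}" using noY g(1) a' unfolding Y'_def by auto
              then obtain j where j: "j \<in> keys a'" "j \<noteq> l" by blast
              then have "j \<in> {l+1..n}" using \<open>keys a' \<subseteq> {l..n}\<close> by auto
              note j = j(1) this
              then show "\<exists>j\<in>keys a'. x j = 0" using assms(9) x by blast
            qed
            ultimately show ?thesis unfolding IZ_def vanishing_ideal_def by auto
          qed
          then have "g \<in> IX" using g(1) unfolding IX_def Y'_def by auto
          then have "mmonom a \<in> init_ideal {0..n} W IX"
            using L_gen[OF st _ g(2) g(3)] keys_le2[OF g(3)] ka by auto
          then show False using an by simp
        qed
        moreover have "a \<in> monos_deg {l..n} m" using kl md unfolding monos_deg_def by auto
        ultimately show ?thesis unfolding SY_def std_monos_def by auto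
      next
        assume kl: "keys a \<subseteq> {0..l}"
        have "mmonom a \<notin> init_ideal {0..l} W Z'"
        proof
          assume "mmonom a \<in> init_ideal {0..l} W Z'"
          then obtain g c where g: "g \<in> Z'" "g \<noteq> 0" "a = lead_mono W g + c" using L_div by blast
          have "g \<in> IY"
          proof -
            have "g \<in> polys_in {0..n}" using g(1) unfolding Z'_def IZ_def vanishing_ideal_def by auto
            moreover have "\<forall>x\<in>Y. meval g x = 0"
            proof (intro ballI E0)
              fix x a' assume x: "x \<in> Y" and a': "a' \<in> keys g"
              have "keys a' \<subseteq> {0..l}" using g(1) a' unfolding Z'_def polys_in_def by auto
              moreover have "\<not> keys a' \<subseteq> {l}" using noZ g(1) a' unfolding Z'_def by auto
              then obtain j where j: "j \<in> keys a'" "j \<noteq> l" by blast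
              then have "j < l" using \<open>keys a' \<subseteq> {0..l}\<close> by auto
              note j = j(1) this
              then show "\<exists>j\<in>keys a'. x j = 0" using assms(8) x by blast
            qed
            ultimately show ?thesis unfolding IY_def vanishing_ideal_def by auto
          qed
          then have "g \<in> IX" using g(1) unfolding IX_def Z'_def by auto
          then have "mmonom a \<in> init_ideal {0..n} W IX"
            using L_gen[OF st _ g(2) g(3)] keys_le2[OF g(3)] ka by auto
          then show False using an by simp
        qed
        moreover have "a \<in> monos_deg {0..l} m" using kl md unfolding monos_deg_def by auto
        ultimately show ?thesis unfolding SZ_def std_monos_def by auto
      qed
    qed
  qed

  define e where "e = (Poly_Mapping.single l m :: mono)"
  have ke: "keys e = {l}" unfolding e_def using assms(4) by simp
  have me: "mdeg e = m" unfolding mdeg_def ke e_def by simp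
  have C4: "SY \<inter> SZ = {e}"
  proof
    show "SY \<inter> SZ \<subseteq> {e}"
    proof
      fix a assume a: "a \<in> SY \<inter> SZ"
      then have k1: "keys a \<subseteq> {l..n}" and k2: "keys a \<subseteq> {0..l}" and "mdeg a = m"
        unfolding SY_def SZ_def std_monos_def monos_deg_def by auto
      have "keys a \<subseteq> {l}"
      proof
        fix x assume "x \<in> keys a"
        then have "x \<in> {l..n}" "x \<in> {0..l}" using k1 k2 by blast+
        then show "x \<in> {l}" by simp
      qed
      then have "a = e" using \<open>mdeg a = m\<close>
      proof -
        assume k: "keys a \<subseteq> {l}" and d: "mdeg a = m"
        have "keys a \<noteq> {}" using d assms(4) unfolding mdeg_def by auto
        then have kk: "keys a = {l}" using k by blast
        then have "lkp a l = m" using d unfolding mdeg_def by simp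
        then show "a = e" unfolding e_def
        proof (intro poly_mapping_eqI)
          fix i show "lkp a i = lkp (Poly_Mapping.single l m) i"
          proof (cases "i = l")
            case True then show ?thesis using \<open>lkp a l = m\<close> by simp
          next
            case False
            then have "i \<notin> keys a" using kk by blast
            then have "lkp a i = 0" by (metis in_keys_iff)
            then show ?thesis using False by (simp add: lookup_single_not_eq)
          qed
        qed
      qed
      then show "a \<in> {e}" by simp
    qed
    have eY: "e \<in> SY"
    proof -
      have "mmonom e \<notin> init_ideal {l..n} W Y'"
      proof
        assume "mmonom e \<in> init_ideal {l..n} W Y'"
        then obtain g c where g: "g \<in> Y'" "g \<noteq> 0" "e = lead_mono W g + c" using L_div by blast
        have "lead_mono W g \<in> keys g" using lead_mono_prop[OF st g(2)] by blast
        moreover have "keys (lead_mono W g) \<subseteq> {l}" using keys_le[OF g(3)] ke by simp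
        ultimately show False using noY g(1) unfolding Y'_def by auto
      qed
      moreover have "e \<in> monos_deg {l..n} m" using ke me assms(3) unfolding monos_deg_def by auto
      ultimately show ?thesis unfolding SY_def std_monos_def by auto
    qed
    have eZ: "e \<in> SZ"
    proof -
      have "mmonom e \<notin> init_ideal {0..l} W Z'"
      proof
        assume "mmonom e \<in> init_ideal {0..l} W Z'"
        then obtain g c where g: "g \<in> Z'" "g \<noteq> 0" "e = lead_mono W g + c" using L_div by blast
        have "lead_mono W g \<in> keys g" using lead_mono_prop[OF st g(2)] by blast
        moreover have "keys (lead_mono W g) \<subseteq> {l}" using keys_le[OF g(3)] ke by simp
        ultimately show False using noZ g(1) unfolding Z'_def by auto
      qed
      moreover have "e \<in> monos_deg {0..l} m" using ke me unfolding monos_deg_def by auto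
      ultimately show ?thesis unfolding SZ_def std_monos_def by auto
    qed
    show "{e} \<subseteq> SY \<inter> SZ" using eY eZ by simp
  qed
  have SXe: "SX = SY \<union> SZ" using C1 C2 C3 by blast
  have finY: "finite SY" unfolding SY_def std_monos_def
    by (rule finite_subset[OF _ fin_monos[of "{l..n}" m]]) auto
  have finZ: "finite SZ" unfolding SZ_def std_monos_def
    by (rule finite_subset[OF _ fin_monos[of "{0..l}" m]]) auto
  have we: "wt r e = int m * r l" unfolding wt_def ke e_def by simp
  have sumX: "(\<Sum>a\<in>SX. wt r a) = (\<Sum>a\<in>SY. wt r a) + (\<Sum>a\<in>SZ. wt r a) - int m * r l"
    unfolding SXe using sum_Un[OF finY finZ, of "wt r"] C4 we by simp
  have sumR: "real_of_int (\<Sum>a\<in>SX. wt r a) = real_of_int (\<Sum>a\<in>SY. wt r a) + real_of_int (\<Sum>a\<in>SZ. wt r a) - real m * real_of_int (r l)"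
    by (simp only: sumX of_int_add of_int_diff of_int_mult of_int_of_nat_eq)
  have cards: "card {0..n} = n + 1" "card {l..n} = n + 1 - l" "card {0..l} = l + 1" by auto
  show ?thesis
    unfolding Let_def hm_index_def
    unfolding W_def[symmetric] IY_def[symmetric] IZ_def[symmetric] IX_def[symmetric]
      Y'_def[symmetric] Z'_def[symmetric] SX_def[symmetric] SY_def[symmetric] SZ_def[symmetric] cards
    by (rule aux_eq[OF sumR])
qed

end
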